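(* Let $V$ be a space. The following are equivalent: (i) $V$ is homothetic to $\overline{V}$; (ii) $V$ is homothetic to $\langle 1,\tau\rangle_{\mathbb{Q}}$ for some $\tau$ with $|\tau|^2\in\mathbb{Q}$.
   Context: A space is a $2$-dimensional $\mathbb{Q}$-vector subspace $V\subset\mathbb{C}$ containing two $\mathbb{R}$-linearly independent vectors; $\langle 1,\tau\rangle_{\mathbb{Q}}=\mathbb{Q}+\mathbb{Q}\tau$. Spaces $V_1,V_2$ are homothetic if $V_2=\lambda V_1$ for some $\lambda\in\mathbb{C}^*$. $\overline{V}$ is the complex conjugate of $V$. *)

theory Defs
  imports Complex_Main
begin

definition qspan :: "complex \<Rightarrow> complex \<Rightarrow> complex set" where
  "qspan a b = {of_rat p * a + of_rat q * b | p q. True}"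

definition Q_indep :: "complex \<Rightarrow> complex \<Rightarrow> bool" where
  "Q_indep a b \<longleftrightarrow> (\<forall>p q :: rat. of_rat p * a + of_rat q * b = 0 \<longrightarrow> p = 0 \<and> q = 0)"

definition R_indep :: "complex \<Rightarrow> complex \<Rightarrow> bool" where
  "R_indep a b \<longleftrightarrow> (\<forall>r s :: real. of_real r * a + of_real s * b = 0 \<longrightarrow> r = 0 \<and> s = 0)"

definition is_space :: "complex set \<Rightarrow> bool" where
  "is_space V \<longleftrightarrow> (\<exists>a b. Q_indep a b \<and> V = qspan a b) \<and> (\<exists>u\<in>V. \<exists>v\<in>V. R_indep u v)"

definition homothetic :: "complex set \<Rightarrow> complex set \<Rightarrow> bool" where
  "homothetic V W \<longleftrightarrow> (\<exists>l. l \<noteq> 0 \<and> W = (\<lambda>z. l * z) ` V)"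

end

theory Submission
  imports Defs
begin

lemma cnj_of_rat [simp]: "cnj (of_rat p) = of_rat p"
  by (cases p) (simp add: of_rat_rat)

lemma of_real_of_rat: "complex_of_real (of_rat p) = of_rat p"
  by (cases p) (simp add: of_rat_rat)

lemma qspan_mult: "(\<lambda>z. l * z) ` qspan a b = qspan (l*a) (l*b)"
proof -
  have "(\<lambda>z. l * z) ` qspan a b = {l * (of_rat p * a + of_rat q * b) | p q. True}"
    unfolding qspan_def by auto
  also have "\<dots> = qspan (l*a) (l*b)" unfolding qspan_def by (simp add: algebra_simps)
  finally show ?thesis .
qed

lemma qspan_memI: "of_rat p * a + of_rat q * b \<in> qspan a b"
  unfolding qspan_def by auto

lemma qspan_memE: assumes "x \<in> qspan a b" obtains p q where "x = of_rat p * a + of_rat q * b"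
  using assms unfolding qspan_def by auto

lemma qspan_cnj: "cnj ` qspan a b = qspan (cnj a) (cnj b)"
proof
  show "cnj ` qspan a b \<subseteq> qspan (cnj a) (cnj b)"
  proof
    fix z assume "z \<in> cnj ` qspan a b"
    then obtain w where w: "w \<in> qspan a b" "z = cnj w" by auto
    then obtain p q where "w = of_rat p * a + of_rat q * b" by (auto elim: qspan_memE)
    hence "z = of_rat p * cnj a + of_rat q * cnj b" using w by simp
    thus "z \<in> qspan (cnj a) (cnj b)" using qspan_memI by metis
  qed
  show "qspan (cnj a) (cnj b) \<subseteq> cnj ` qspan a b"
  proof
    fix z assume "z \<in> qspan (cnj a) (cnj b)"
    then obtain p q where z: "z = of_rat p * cnj a + of_rat q * cnj b" by (auto elim: qspan_memE)
    hence "z = cnj (of_rat p * a + of_rat q * b)" by simp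
    thus "z \<in> cnj ` qspan a b" using qspan_memI by blast
  qed
qed

lemma Q_indep_nz: "Q_indep a b \<Longrightarrow> a \<noteq> 0"
  unfolding Q_indep_def by (metis add.right_neutral mult_zero_left mult_zero_right of_rat_1 of_rat_0 one_neq_zero mult_1)

lemma Q_dep_mult:
  assumes "w \<noteq> 0" "\<not> Q_indep w z" shows "\<exists>c::rat. z = of_rat c * w"
proof -
  obtain p q :: rat where h: "of_rat p * w + of_rat q * z = 0" "p \<noteq> 0 \<or> q \<noteq> 0"
    using assms(2) unfolding Q_indep_def by auto
  have "q \<noteq> 0" using h assms(1) by auto
  hence "z = of_rat (- p / q) * w" using h(1)
    by (simp add: of_rat_divide of_rat_minus field_simps) (metis add.commute add_eq_0_iff mult.commute)
  thus ?thesis by blast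
qed

lemma basis_change:
  assumes ab: "Q_indep a b" and xy: "Q_indep x y"
    and x: "x = of_rat p1 * a + of_rat q1 * b" and y: "y = of_rat p2 * a + of_rat q2 * b"
  shows "qspan x y = qspan a b"
proof
  show "qspan x y \<subseteq> qspan a b"
  proof
    fix z assume "z \<in> qspan x y"
    then obtain r s where z: "z = of_rat r * x + of_rat s * y" by (rule qspan_memE)
    have "z = of_rat (r*p1 + s*p2) * a + of_rat (r*q1 + s*q2) * b"
      unfolding z x y by (simp add: of_rat_add of_rat_mult algebra_simps)
    thus "z \<in> qspan a b" using qspan_memI by metis
  qed
next
  define D where "D = p1 * q2 - p2 * q1"
  have D: "D \<noteq> 0"
  proof
    assume D0: "D = 0"
    have "of_rat q2 * x + of_rat (-q1) * y = of_rat D * a + of_rat 0 * b"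
      unfolding x y D_def by (simp add: of_rat_add of_rat_mult of_rat_diff of_rat_minus algebra_simps)
    hence "of_rat q2 * x + of_rat (-q1) * y = 0" using D0 by simp
    hence "q2 = 0 \<and> -q1 = 0" using xy unfolding Q_indep_def by blast
    hence "q2 = 0 \<and> q1 = 0" by simp
    moreover have "of_rat p2 * x + of_rat (-p1) * y = of_rat 0 * a + of_rat (-D) * b"
      unfolding x y D_def by (simp add: of_rat_add of_rat_mult of_rat_diff of_rat_minus algebra_simps)
    hence "of_rat p2 * x + of_rat (-p1) * y = 0" using D0 by simp
    hence "p2 = 0 \<and> -p1 = 0" using xy unfolding Q_indep_def by blast
    hence "p2 = 0 \<and> p1 = 0" by simp
    ultimately have "x = 0" using x by simp
    hence "of_rat 1 * x + of_rat 0 * y = 0" by simp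
    thus False using xy unfolding Q_indep_def by fastforce
  qed
  show "qspan a b \<subseteq> qspan x y"
  proof
    fix z assume "z \<in> qspan a b"
    then obtain r s where z: "z = of_rat r * a + of_rat s * b" by (rule qspan_memE)
    have "z = of_rat ((r*q2 - s*p2)/D) * x + of_rat ((s*p1 - r*q1)/D) * y"
    proof -
      have h1: "of_rat D * of_rat ((r*q2 - s*p2)/D) = (of_rat (r*q2 - s*p2) :: complex)"
        using D by (simp flip: of_rat_mult)
      have h2: "of_rat D * of_rat ((s*p1 - r*q1)/D) = (of_rat (s*p1 - r*q1) :: complex)"
        using D by (simp flip: of_rat_mult)
      have "of_rat D * (of_rat ((r*q2 - s*p2)/D) * x + of_rat ((s*p1 - r*q1)/D) * y)
          = of_rat (r*q2 - s*p2) * x + of_rat (s*p1 - r*q1) * y"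
        using h1 h2 by (simp add: distrib_left flip: mult.assoc)
      also have "\<dots> = of_rat D * z"
        unfolding z x y D_def by (simp add: of_rat_add of_rat_mult of_rat_diff algebra_simps)
      finally show ?thesis using D by simp
    qed
    thus "z \<in> qspan x y" using qspan_memI by metis
  qed
qed

lemma qspan_swap: "qspan x y = qspan y x"
  unfolding qspan_def by (auto simp: add.commute) (metis add.commute)+

lemma qspan_scale2:
  assumes "n \<noteq> 0" shows "qspan x (of_rat n * y) = qspan x y"
proof
  show "qspan x (of_rat n * y) \<subseteq> qspan x y"
  proof
    fix z assume "z \<in> qspan x (of_rat n * y)"
    then obtain p q where "z = of_rat p * x + of_rat q * (of_rat n * y)" by (rule qspan_memE)
    hence "z = of_rat p * x + of_rat (q * n) * y" by (simp add: of_rat_mult)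
    thus "z \<in> qspan x y" using qspan_memI by metis
  qed
  show "qspan x y \<subseteq> qspan x (of_rat n * y)"
  proof
    fix z assume "z \<in> qspan x y"
    then obtain p q where "z = of_rat p * x + of_rat q * y" by (rule qspan_memE)
    hence "z = of_rat p * x + of_rat (q / n) * (of_rat n * y)"
      using assms by (simp add: of_rat_divide)
    thus "z \<in> qspan x (of_rat n * y)" using qspan_memI by metis
  qed
qed

lemma cnj_real: "cnj z = z \<Longrightarrow> z = of_real (Re z)"
  by (simp add: complex_eq_iff)

lemma dir2:
  assumes "(cmod \<tau>)^2 \<in> \<rat>" "homothetic V (qspan 1 \<tau>)"
  shows "homothetic V (cnj ` V)"
proof -
  obtain l where l: "l \<noteq> 0" "qspan 1 \<tau> = (\<lambda>z. l * z) ` V"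
    using assms(2) unfolding homothetic_def by auto
  define il where "il = inverse l"
  have il: "il \<noteq> 0" using l il_def by simp
  have "(\<lambda>z. il * z) ` qspan 1 \<tau> = V"
    unfolding l(2) image_image il_def using l(1) by (simp flip: mult.assoc)
  hence V: "V = qspan il (il * \<tau>)" using qspan_mult[of il 1 \<tau>] by simp
  define c where "c = cnj il"
  have c: "c \<noteq> 0" using il c_def by simp
  have cV: "cnj ` V = qspan c (c * cnj \<tau>)" unfolding V qspan_cnj c_def by simp
  show ?thesis
  proof (cases "\<tau> = 0")
    case True
    define k where "k = c / il"
    have "(\<lambda>z. k * z) ` V = cnj ` V"
      unfolding cV unfolding V qspan_mult k_def using True il by simp
    moreover have "k \<noteq> 0" using k_def c il by simp
    ultimately show ?thesis unfolding homothetic_def by metis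
  next
    case False
    obtain n where n: "(cmod \<tau>)^2 = of_rat n" using assms(1) Rats_cases by blast
    have n0: "n \<noteq> 0" using n False by auto
    have ct: "cnj \<tau> = of_rat n / \<tau>"
    proof -
      have "\<tau> * cnj \<tau> = of_real ((cmod \<tau>)^2)" by (simp add: complex_mult_cnj cmod_def)
      also have "\<dots> = of_rat n" using n of_real_of_rat by simp
      finally show ?thesis using False by (simp add: field_simps)
    qed
    define k where "k = c / (il * \<tau>)"
    have "(\<lambda>z. k * z) ` V = qspan (c / \<tau>) c"
      unfolding V qspan_mult k_def using False il by simp
    also have "\<dots> = qspan c (c / \<tau>)" by (rule qspan_swap)
    also have "\<dots> = qspan c (of_rat n * (c / \<tau>))" using qspan_scale2[OF n0, of c "c / \<tau>"] by simp
    also have "\<dots> = cnj ` V" unfolding cV ct by (simp add: field_simps)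
    finally have "(\<lambda>z. k * z) ` V = cnj ` V" .
    moreover have "k \<noteq> 0" using k_def c il False by simp
    ultimately show ?thesis unfolding homothetic_def by metis
  qed
qed

lemma dir1:
  assumes sp: "is_space V" and h: "homothetic V (cnj ` V)"
  shows "\<exists>\<tau>. (cmod \<tau>)^2 \<in> \<rat> \<and> homothetic V (qspan 1 \<tau>)"
proof -
  obtain a b where ab: "Q_indep a b" and V: "V = qspan a b" using sp unfolding is_space_def by blast
  obtain u v where uv: "u \<in> V" "v \<in> V" "R_indep u v" using sp unfolding is_space_def by blast
  have a0: "a \<noteq> 0" using ab by (rule Q_indep_nz)
  have b0: "b \<noteq> 0"
  proof
    assume "b = 0"
    hence "of_rat 0 * a + of_rat 1 * b = 0" by simp
    thus False using ab unfolding Q_indep_def by fastforce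
  qed
  have ab0: "a + b \<noteq> 0"
  proof
    assume "a + b = 0"
    hence "of_rat 1 * a + of_rat 1 * b = 0" by simp
    thus False using ab unfolding Q_indep_def by fastforce
  qed
  have notreal: "b \<noteq> of_real r * a" for r
  proof
    assume br: "b = of_real r * a"
    have realmul: "\<exists>s. w = of_real s * a" if "w \<in> V" for w
    proof -
      have "w \<in> qspan a b" using that V by simp
      then obtain p q where "w = of_rat p * a + of_rat q * b" by (rule qspan_memE)
      hence "w = of_real (of_rat p + of_rat q * r) * a"
        using br by (simp add: of_real_of_rat algebra_simps flip: of_real_of_rat)
      thus ?thesis by blast
    qed
    obtain su sv where su: "u = of_real su * a" and sv: "v = of_real sv * a"
      using realmul uv by blast
    have "of_real sv * u + of_real (-su) * v = 0" unfolding su sv by (simp add: algebra_simps)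
    hence "sv = 0 \<and> -su = 0" using uv(3) unfolding R_indep_def by blast
    hence "u = 0" using su by simp
    hence "of_real 1 * u + of_real 0 * v = 0" by simp
    thus False using uv(3) unfolding R_indep_def by fastforce
  qed
  obtain \<mu> where mu: "\<mu> \<noteq> 0" "cnj ` V = (\<lambda>z. \<mu> * z) ` V"
    using h unfolding homothetic_def by auto
  define \<sigma> where "\<sigma> w = cnj w / \<mu>" for w
  have sig: "\<sigma> w \<in> V" if "w \<in> V" for w
  proof -
    have "cnj w \<in> (\<lambda>z. \<mu> * z) ` V" using that mu(2) by blast
    then obtain v' where "v' \<in> V" "cnj w = \<mu> * v'" by auto
    thus ?thesis using mu(1) unfolding \<sigma>_def by simp
  qed
  have aV: "a \<in> V" and bV: "b \<in> V" and abV: "a + b \<in> V"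
    using qspan_memI[of 1 a 0 b] qspan_memI[of 0 a 1 b] qspan_memI[of 1 a 1 b] V by simp_all
  define R where "R = (cmod \<mu>)^2"
  have R0: "R > 0" using mu(1) R_def by simp
  have Rq: "inverse R \<in> \<rat>"
  proof -
    have "\<sigma> (\<sigma> a) \<in> V" using sig aV by blast
    moreover have "\<sigma> (\<sigma> a) = a / of_real R"
      unfolding \<sigma>_def R_def using mu(1) by (simp add: complex_mult_cnj cmod_def field_simps)
    ultimately have "a / of_real R \<in> qspan a b" using V by simp
    then obtain p q where pq: "a / of_real R = of_rat p * a + of_rat q * b"
      by (rule qspan_memE)
    have q0: "q = 0"
    proof (rule ccontr)
      assume q: "q \<noteq> 0"
      have "b = of_real ((1 / R - of_rat p) / of_rat q) * a"
        using pq q R0 by (simp add: field_simps of_real_of_rat flip: of_real_of_rat)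
      thus False using notreal by blast
    qed
    hence "a / of_real R = of_rat p * a" using pq by simp
    hence "a * (1 / of_real R) = a * of_rat p" by simp
    hence "1 / of_real R = (of_rat p :: complex)" using a0 mult_left_cancel by blast
    hence "complex_of_real (inverse R) = complex_of_real (of_rat p)"
      by (simp add: of_real_of_rat divide_inverse)
    hence "inverse R = of_rat p" using of_real_eq_iff by blast
    thus ?thesis by simp
  qed
  have "\<exists>w\<in>V. w \<noteq> 0 \<and> Q_indep w (\<sigma> w)"
  proof (rule ccontr)
    assume "\<not> ?thesis"
    hence nd: "\<not> Q_indep w (\<sigma> w)" if "w \<in> V" "w \<noteq> 0" for w using that by blast
    obtain c1 where c1: "\<sigma> a = of_rat c1 * a" using Q_dep_mult[OF a0 nd[OF aV a0]] by blast
    obtain c2 where c2: "\<sigma> b = of_rat c2 * b" using Q_dep_mult[OF b0 nd[OF bV b0]] by blast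
    obtain c3 where c3: "\<sigma> (a+b) = of_rat c3 * (a+b)" using Q_dep_mult[OF ab0 nd[OF abV ab0]] by blast
    have "\<sigma> (a+b) = \<sigma> a + \<sigma> b" unfolding \<sigma>_def by (simp add: add_divide_distrib)
    hence "of_rat (c1 - c3) * a + of_rat (c2 - c3) * b = 0"
      using c1 c2 c3 by (simp add: of_rat_diff algebra_simps)
    hence "c1 - c3 = 0 \<and> c2 - c3 = 0" using ab unfolding Q_indep_def by blast
    hence c21: "c2 = c1" by simp
    have ca: "cnj a = \<mu> * of_rat c1 * a" using c1 mu(1) unfolding \<sigma>_def by (simp add: field_simps)
    have cb: "cnj b = \<mu> * of_rat c1 * b" using c2 c21 mu(1) unfolding \<sigma>_def by (simp add: field_simps)
    have "c1 \<noteq> 0" using ca a0 by auto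
    hence "cnj (b / a) = b / a" using ca cb mu(1) a0 by simp
    hence "b / a = of_real (Re (b / a))" by (rule cnj_real)
    hence "b = of_real (Re (b / a)) * a" using a0 by (simp add: field_simps)
    thus False using notreal by blast
  qed
  then obtain w where w: "w \<in> V" "w \<noteq> 0" "Q_indep w (\<sigma> w)" by blast
  have "w \<in> qspan a b" using w(1) V by simp
  then obtain p1 q1 where wx: "w = of_rat p1 * a + of_rat q1 * b" by (rule qspan_memE)
  have "\<sigma> w \<in> qspan a b" using sig[OF w(1)] V by simp
  then obtain p2 q2 where wy: "\<sigma> w = of_rat p2 * a + of_rat q2 * b" by (rule qspan_memE)
  have Vw: "V = qspan w (\<sigma> w)" using basis_change[OF ab w(3) wx wy] V by simp
  define \<tau> where "\<tau> = \<sigma> w / w"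
  have "(\<lambda>z. inverse w * z) ` V = qspan 1 \<tau>"
    unfolding Vw qspan_mult \<tau>_def using w(2) by (simp add: field_simps)
  hence hom: "homothetic V (qspan 1 \<tau>)" unfolding homothetic_def using w(2)
    by (metis inverse_nonzero_iff_nonzero)
  have "cmod \<tau> = 1 / cmod \<mu>"
    unfolding \<tau>_def \<sigma>_def using w(2) mu(1) by (simp add: norm_divide norm_mult)
  hence "(cmod \<tau>)^2 = inverse R" unfolding R_def by (simp add: power_divide divide_inverse power_inverse)
  thus ?thesis using hom Rq by metis
qed

theorem lemma4p4:
  assumes "is_space V"
  shows "homothetic V (cnj ` V) \<longleftrightarrow>
         (\<exists>\<tau>. (cmod \<tau>)^2 \<in> \<rat> \<and> homothetic V (qspan 1 \<tau>))"
  using dir1[OF assms] dir2 by blast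

end
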